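(* Let $f:\mathbb{R}^d\to\mathbb{R}$ be bounded below by $f^*$ and smooth with non-negative constants $L_1,\dots,L_d$, i.e. $f(y)\le f(x)+\langle\nabla f(x),y-x\rangle+\sum_{i=1}^d\frac{L_i}{2}(y_i-x_i)^2$ for all $x,y$, and let $\bar L:=\frac1d\sum_iL_i$. Let $M\ge1$ and $l=\lfloor\frac{M+1}{2}\rfloor$. Suppose that at every point $x$, each of $M$ nodes can draw an estimator $\hat g^m(x)$, $m=1,\dots,M$, these $M$ estimators being mutually independent and identically distributed, and each satisfying the SPB assumption with success probabilities $\rho_i(x)$. Consider parallel signSGD with majority vote: $x_{k+1}=x_k-\gamma_k\,\mathrm{sign}\big[\sum_{m=1}^M\mathrm{sign}\,\hat g^m(x_k)\big]$, with fresh draws at each iteration. (a) If $\gamma_k=\gamma_0/\sqrt{k+1}$, $\gamma_0>0$, then for every $K\ge2$, $$\min_{0\le k<K}\mathbb{E}\|\nabla f(x_k)\|_{\rho_M}\le\frac{f(x_0)-f^*}{\gamma_0\sqrt K}+\frac{3\gamma_0d\bar L}{2}\frac{\log K}{\sqrt K}.$$ (b) If $\gamma_k\equiv\gamma>0$, then $\frac1K\sum_{k=0}^{K-1}\mathbb{E}\|\nabla f(x_k)\|_{\rho_M}\le\frac{f(x_0)-f^*}{\gamma K}+\frac{\gamma d\bar L}{2}$.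
   Context: $g(x):=\nabla f(x)$; $\mathrm{sign}\,t=1,0,-1$ for $t>0,t=0,t<0$, entrywise on vectors. SPB: for each $i$ with $g_i(x)\ne0$, $\rho_i(x):=\mathrm{Prob}(\mathrm{sign}\,\hat g^m_i(x)=\mathrm{sign}\,g_i(x))>\tfrac12$. Regularized incomplete beta function: $I(p;a,b)=\frac{\int_0^pt^{a-1}(1-t)^{b-1}dt}{\int_0^1t^{a-1}(1-t)^{b-1}dt}$ for $a,b>0$, $p\in[0,1]$. The $\rho_M$-norm: $\|g(x)\|_{\rho_M}:=\sum_{i=1}^d\big(2I(\rho_i(x);l,l)-1\big)|g_i(x)|$ (terms with $g_i(x)=0$ vanish). $\log$ is natural logarithm. *)

theory Defs
  imports "HOL-Probability.Probability"
begin

definition vsign :: "real^'n \<Rightarrow> real^'n" where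
  "vsign v = (\<chi> i. sgn (v $ i))"

text \<open>Parallel signSGD with majority vote. The estimator of node m at iteration k
  at point x is G x (xi k m \<omega>); the noises xi k m are fresh iid draws.\<close>
primrec ssgd :: "(real^'d \<Rightarrow> 'b \<Rightarrow> real^'d) \<Rightarrow> (nat \<Rightarrow> real) \<Rightarrow> real^'d \<Rightarrow> nat
    \<Rightarrow> (nat \<Rightarrow> nat \<Rightarrow> 'a \<Rightarrow> 'b) \<Rightarrow> nat \<Rightarrow> 'a \<Rightarrow> real^'d" where
  "ssgd G \<gamma> x0 M xi 0 \<omega> = x0"
| "ssgd G \<gamma> x0 M xi (Suc k) \<omega> =
     (let x = ssgd G \<gamma> x0 M xi k \<omega>
      in x - \<gamma> k *\<^sub>R vsign (\<Sum>m<M. vsign (G x (xi k m \<omega>))))"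

definition inc_beta :: "real \<Rightarrow> real \<Rightarrow> real \<Rightarrow> real" where
  "inc_beta p a b =
     (LBINT t=0..p. t powr (a - 1) * (1 - t) powr (b - 1)) /
     (LBINT t=0..1. t powr (a - 1) * (1 - t) powr (b - 1))"

definition spb_rho :: "'b measure \<Rightarrow> (real^'d \<Rightarrow> 'b \<Rightarrow> real^'d) \<Rightarrow> (real^'d \<Rightarrow> real^'d)
    \<Rightarrow> real^'d \<Rightarrow> 'd \<Rightarrow> real" where
  "spb_rho Q G g x i = measure Q {w \<in> space Q. sgn (G x w $ i) = sgn (g x $ i)}"

definition rhoM_norm :: "nat \<Rightarrow> 'b measure \<Rightarrow> (real^'d \<Rightarrow> 'b \<Rightarrow> real^'d) \<Rightarrow> (real^'d \<Rightarrow> real^'d)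
    \<Rightarrow> real^'d \<Rightarrow> real" where
  "rhoM_norm M Q G g x =
     (\<Sum>i\<in>UNIV. (2 * inc_beta (spb_rho Q G g x i) (real ((M + 1) div 2)) (real ((M + 1) div 2)) - 1)
                 * \<bar>g x $ i\<bar>)"

end

theory Submission
  imports Defs "HOL-Analysis.Harmonic_Numbers"
begin

fun Bp :: "nat \<Rightarrow> real \<Rightarrow> (nat \<Rightarrow> real) \<Rightarrow> real" where
  "Bp 0 p h = h 0"
| "Bp (Suc n) p h = p * Bp n p (\<lambda>j. h (Suc j)) + (1 - p) * Bp n p h"

lemma Bp_lin: "Bp n p (\<lambda>j. a * h1 j + b * h2 j) = a * Bp n p h1 + b * Bp n p h2"
  by (induction n arbitrary: h1 h2) (simp_all add: algebra_simps)

lemma Bp_diff: "Bp n p (\<lambda>j. h1 j - h2 j) = Bp n p h1 - Bp n p h2"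
  using Bp_lin[of n p 1 h1 "-1" h2] by simp

lemma Bp_const: "Bp n p (\<lambda>_. c) = c"
  by (induction n) (simp_all add: algebra_simps)

lemma Bp_zero: "Bp n 0 h = h 0"
  by (induction n arbitrary: h) simp_all

lemma Bp_one: "Bp n 1 h = h n"
  by (induction n arbitrary: h) simp_all

lemma Bp_bound: "p \<in> {0..1} \<Longrightarrow> (\<And>j. \<bar>h j\<bar> \<le> c) \<Longrightarrow> \<bar>Bp n p h\<bar> \<le> c"
proof (induction n arbitrary: h)
  case 0 then show ?case by simp
next
  case (Suc n)
  have a: "\<bar>Bp n p (\<lambda>j. h (Suc j))\<bar> \<le> c" using Suc by auto
  have b: "\<bar>Bp n p h\<bar> \<le> c" using Suc by auto
  have "\<bar>p * Bp n p (\<lambda>j. h (Suc j)) + (1 - p) * Bp n p h\<bar> \<le> p * c + (1-p) * c"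
  proof -
    have "\<bar>p * Bp n p (\<lambda>j. h (Suc j))\<bar> \<le> p * c" using a Suc.prems(1)
      by (simp add: abs_mult mult_left_mono)
    moreover have "\<bar>(1-p) * Bp n p h\<bar> \<le> (1-p) * c" using b Suc.prems(1)
      by (simp add: abs_mult mult_left_mono)
    ultimately show ?thesis by (smt (verit))
  qed
  then show ?case by (simp add: algebra_simps)
qed

lemma alg_aux: "(u::real) = a - b \<Longrightarrow> u = p*c + (1-p)*d \<Longrightarrow>
   1*a + (N*c)*p + ((0-1)*b + (N*d)*(1-p)) = (N+1)*u"
proof -
  assume h1: "u = a - b" and h2: "u = p*c + (1-p)*d"
  have "(N+1)*u = N*u + u" by (simp add: algebra_simps)
  also have "\<dots> = N*(p*c + (1-p)*d) + (a - b)" using h1 h2 by simp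
  finally show ?thesis by (simp add: algebra_simps)
qed

lemma Bp_deriv: "((\<lambda>p. Bp (Suc n) p h) has_real_derivative
     (real (Suc n) * Bp n p (\<lambda>j. h (Suc j) - h j))) (at p)"
proof (induction n arbitrary: h)
  case 0
  show ?case by (auto intro!: derivative_eq_intros simp: algebra_simps)
next
  case (Suc n)
  have e: "(\<lambda>p. Bp (Suc (Suc n)) p h) = (\<lambda>p. p * Bp (Suc n) p (\<lambda>j. h (Suc j)) + (1 - p) * Bp (Suc n) p h)"
    by simp
  note d1 = Suc.IH[of "\<lambda>j. h (Suc j)"]
  note d2 = Suc.IH[of h]
  have "((\<lambda>p. p * Bp (Suc n) p (\<lambda>j. h (Suc j)) + (1 - p) * Bp (Suc n) p h) has_real_derivative
     (1 * Bp (Suc n) p (\<lambda>j. h (Suc j)) + (real (Suc n) * Bp n p (\<lambda>j. h (Suc (Suc j)) - h (Suc j))) * p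
      + ((0 - 1) * Bp (Suc n) p h + (real (Suc n) * Bp n p (\<lambda>j. h (Suc j) - h j)) * (1 - p)))) (at p)"
    by (rule DERIV_add[OF DERIV_mult[OF DERIV_ident d1] DERIV_mult[OF DERIV_diff[OF DERIV_const DERIV_ident] d2]])
  moreover have "1 * Bp (Suc n) p (\<lambda>j. h (Suc j)) + (real (Suc n) * Bp n p (\<lambda>j. h (Suc (Suc j)) - h (Suc j))) * p
      + ((0 - 1) * Bp (Suc n) p h + (real (Suc n) * Bp n p (\<lambda>j. h (Suc j) - h j)) * (1 - p))
     = real (Suc (Suc n)) * Bp (Suc n) p (\<lambda>j. h (Suc j) - h j)"
  proof -
    have A: "Bp (Suc n) p (\<lambda>j. h (Suc j) - h j) = Bp (Suc n) p (\<lambda>j. h (Suc j)) - Bp (Suc n) p h"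
      by (rule Bp_diff)
    have B: "Bp (Suc n) p (\<lambda>j. h (Suc j) - h j) = p * Bp n p (\<lambda>j. h (Suc (Suc j)) - h (Suc j))
       + (1 - p) * Bp n p (\<lambda>j. h (Suc j) - h j)" by simp
    have eq: "real (Suc (Suc n)) = real (Suc n) + 1" by simp
    show ?thesis unfolding eq by (rule alg_aux[OF A B])
  qed
  ultimately show ?case unfolding e by (rule DERIV_cong)
qed

lemma Bp_delta: "Bp m p (\<lambda>j. if j = c then 1 else 0) = real (m choose c) * p ^ c * (1 - p) ^ (m - c)"
proof (induction m arbitrary: c)
  case 0 then show ?case by simp
next
  case (Suc m)
  show ?case
  proof (cases c)
    case 0
    have "Bp m p (\<lambda>j. if Suc j = 0 then 1 else 0) = 0" using Bp_const[of m p 0] by simp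
    then show ?thesis using Suc[of 0] 0 by simp
  next
    case (Suc c')
    have e: "(\<lambda>j. if Suc j = c then 1 else (0::real)) = (\<lambda>j. if j = c' then 1 else 0)"
      using Suc by auto
    have "Bp (Suc m) p (\<lambda>j. if j = c then 1 else 0)
       = p * (real (m choose c') * p ^ c' * (1 - p) ^ (m - c')) + (1-p) * (real (m choose c) * p ^ c * (1 - p) ^ (m - c))"
      using Suc.IH[of c'] Suc.IH[of c] e by simp
    also have "\<dots> = real (Suc m choose c) * p ^ c * (1 - p) ^ (Suc m - c)"
    proof (cases "c' < m")
      case True
      have "m - c' = Suc (m - c)" using True Suc by simp
      then show ?thesis using Suc by (simp add: algebra_simps)
    next
      case False
      then have "m choose c = 0" using Suc by simp
      moreover have "Suc m - c = m - c'" using Suc by simp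
      ultimately show ?thesis using Suc by (simp add: algebra_simps)
    qed
    finally show ?thesis .
  qed
qed

definition hs :: "nat \<Rightarrow> nat \<Rightarrow> real" where
  "hs n j = sgn (2 * real j - real n)"

lemma hs_alt: "hs n j = (if n div 2 + 1 \<le> j then 1 else 0) + (if (n+1) div 2 \<le> j then 1 else 0) - 1"
proof -
  consider "2*j > n" | "2*j = n" | "2*j < n" by linarith
  then show ?thesis
  proof cases
    case 1
    then have "n div 2 + 1 \<le> j" "(n+1) div 2 \<le> j" by presburger+
    moreover have "2 * real j - real n > 0" using 1 by linarith
    ultimately show ?thesis unfolding hs_def by simp
  next
    case 2
    then have "\<not> n div 2 + 1 \<le> j" "(n+1) div 2 \<le> j" by presburger+
    moreover have "2 * real j - real n = 0" using 2 by linarith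
    ultimately show ?thesis unfolding hs_def by simp
  next
    case 3
    then have "\<not> n div 2 + 1 \<le> j" "\<not> (n+1) div 2 \<le> j" by presburger+
    moreover have "2 * real j - real n < 0" using 3 by linarith
    ultimately show ?thesis unfolding hs_def by simp
  qed
qed

lemma hs_delta:
  assumes "1 \<le> n"
  shows "hs n (Suc j) - hs n j = 1 * (if j = n div 2 then 1 else 0) + 1 * (if j = (n+1) div 2 - 1 then 1 else 0)"
proof -
  have b: "1 \<le> (n+1) div 2" using assms by presburger
  have st: "(if a \<le> Suc j then 1 else 0) - (if a \<le> j then 1 else 0) = (if j = a - 1 then (1::real) else 0)"
    if "1 \<le> a" for a using that by (cases "a \<le> j"; cases "j = a - 1") auto
  have "hs n (Suc j) - hs n j = ((if n div 2 + 1 \<le> Suc j then 1 else 0) - (if n div 2 + 1 \<le> j then 1 else 0))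
     + ((if (n+1) div 2 \<le> Suc j then 1 else 0) - (if (n+1) div 2 \<le> j then 1 else 0))"
    unfolding hs_alt by simp
  also have "\<dots> = (if j = n div 2 + 1 - 1 then 1 else 0) + (if j = (n+1) div 2 - 1 then 1 else 0)"
    using st[of "n div 2 + 1"] st[OF b] by simp
  finally show ?thesis by simp
qed

declare Bp.simps(2)[simp del]

lemma hs_deriv:
  assumes "1 \<le> n"
  obtains c t where "c > 0" "(n + 1) div 2 = Suc t"
    "\<And>x. ((\<lambda>p. Bp n p (hs n)) has_real_derivative c * (x * (1 - x)) ^ t) (at x)"
proof -
  obtain m where m: "n = Suc m" using assms by (cases n) auto
  have D: "((\<lambda>p. Bp n p (hs n)) has_real_derivative real n *
      (real (m choose (n div 2)) * x ^ (n div 2) * (1 - x) ^ (m - n div 2)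
       + real (m choose ((n+1) div 2 - 1)) * x ^ ((n+1) div 2 - 1) * (1 - x) ^ (m - ((n+1) div 2 - 1)))) (at x)" for x
  proof -
    have "((\<lambda>p. Bp n p (hs n)) has_real_derivative real n * Bp m x (\<lambda>j. hs n (Suc j) - hs n j)) (at x)"
      unfolding m by (rule Bp_deriv)
    moreover have "Bp m x (\<lambda>j. hs n (Suc j) - hs n j) =
       real (m choose (n div 2)) * x ^ (n div 2) * (1 - x) ^ (m - n div 2)
       + real (m choose ((n+1) div 2 - 1)) * x ^ ((n+1) div 2 - 1) * (1 - x) ^ (m - ((n+1) div 2 - 1))"
      unfolding hs_delta[OF assms] Bp_lin Bp_delta by simp
    ultimately show ?thesis by simp
  qed
  have "(\<exists>t. n = 2*t+1) \<or> (\<exists>t. n = 2*t+2)"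
  proof (cases "even n")
    case True
    then have "n = 2*(n div 2 - 1) + 2" using assms by presburger
    then show ?thesis by blast
  next
    case False
    then have "n = 2*(n div 2) + 1" by presburger
    then show ?thesis by blast
  qed
  then consider t where "n = 2*t + 1" | t where "n = 2*t + 2" by blast
  then show ?thesis
  proof cases
    case 1
    have e1: "n div 2 = t" "(n+1) div 2 = Suc t" "m = 2*t" using 1 m by presburger+
    show ?thesis
    proof (rule that[of "real n * (2 * real (2*t choose t))" t])
      show "0 < real n * (2 * real (2 * t choose t))" using assms by simp
      show "(n + 1) div 2 = Suc t" by (fact e1(2))
      fix x
      have px: "((x::real) * (1 - x)) ^ t = x ^ t * (1-x) ^ t" by (simp add: power_mult_distrib)
      then have "real n * (real (m choose (n div 2)) * x ^ (n div 2) * (1 - x) ^ (m - n div 2)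
       + real (m choose ((n+1) div 2 - 1)) * x ^ ((n+1) div 2 - 1) * (1 - x) ^ (m - ((n+1) div 2 - 1)))
        = real n * (2 * real (2 * t choose t)) * (x * (1 - x)) ^ t"
      proof -
        have a1: "2*t - t = t" "Suc t - 1 = t" by simp_all
        show ?thesis unfolding e1 a1 px by (simp add: algebra_simps)
      qed
      then show "((\<lambda>p. Bp n p (hs n)) has_real_derivative real n * (2 * real (2 * t choose t)) * (x * (1 - x)) ^ t) (at x)"
        using D[of x] by (rule DERIV_cong[rotated])
    qed
  next
    case 2
    have e1: "n div 2 = Suc t" "(n+1) div 2 = Suc t" "m = 2*t + 1" using 2 m by presburger+
    have ch: "(2*t+1 choose Suc t) = (2*t+1 choose t)"
      using binomial_symmetric[of t "2*t+1"] by simp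
    show ?thesis
    proof (rule that[of "real n * real (2*t+1 choose t)" t])
      show "0 < real n * real (2*t+1 choose t)" using assms by simp
      show "(n + 1) div 2 = Suc t" by (fact e1(2))
      fix x
      have "real (2*t+1 choose Suc t) * x ^ Suc t * (1 - x) ^ (2*t+1 - Suc t)
         + real (2*t+1 choose t) * x ^ t * (1 - x) ^ (2*t+1 - t)
         = real (2*t+1 choose t) * (x * (1 - x)) ^ t"
      proof -
        have a1: "2*t+1 - Suc t = t" "2*t+1-t = Suc t" by simp_all
        show ?thesis unfolding ch a1 power_mult_distrib power_Suc by (simp add: algebra_simps)
      qed
      then have "real n * (real (m choose (n div 2)) * x ^ (n div 2) * (1 - x) ^ (m - n div 2)
       + real (m choose ((n+1) div 2 - 1)) * x ^ ((n+1) div 2 - 1) * (1 - x) ^ (m - ((n+1) div 2 - 1)))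
        = real n * real (2*t+1 choose t) * (x * (1 - x)) ^ t"
      proof -
        have a1: "Suc t - 1 = t" by simp_all
        show ?thesis unfolding e1 a1 using \<open>_ = real (2*t+1 choose t) * (x * (1 - x)) ^ t\<close> by simp
      qed
      then show "((\<lambda>p. Bp n p (hs n)) has_real_derivative real n * real (2*t+1 choose t) * (x * (1 - x)) ^ t) (at x)"
        using D[of x] by (rule DERIV_cong[rotated])
    qed
  qed
qed

lemma inc_beta_Bp:
  assumes n: "1 \<le> n" and p: "p \<in> {0..1}"
  shows "2 * inc_beta p (real ((n+1) div 2)) (real ((n+1) div 2)) - 1 = Bp n p (hs n)"
proof -
  obtain c t where c: "c > 0" and l: "(n + 1) div 2 = Suc t"
    and D: "\<And>x. ((\<lambda>p. Bp n p (hs n)) has_real_derivative c * (x * (1 - x)) ^ t) (at x)"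
    using hs_deriv[OF n] by blast
  have I: "(LBINT x=0..q. x powr (real ((n+1) div 2) - 1) * (1 - x) powr (real ((n+1) div 2) - 1))
      = (Bp n q (hs n) - Bp n 0 (hs n)) / c" if q: "0 \<le> q" "q \<le> 1" for q
  proof -
    have "(LBINT x=0..q. x powr (real ((n+1) div 2) - 1) * (1 - x) powr (real ((n+1) div 2) - 1))
        = (LBINT x=0..q. (x * (1 - x)) ^ t)"
    proof (rule interval_integral_cong, goal_cases)
      case (1 x)
      then have x: "0 < x" "x < 1" using q by (auto simp: einterval_iff)
      have "real ((n+1) div 2) - 1 = real t" using l by simp
      then show ?case
        using x by (simp add: powr_realpow power_mult_distrib)
    qed
    also have "\<dots> = Bp n q (hs n) / c - Bp n 0 (hs n) / c"
    proof (subst zero_ereal_def, rule interval_integral_FTC_finite)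
      show "continuous_on {min 0 q..max 0 q} (\<lambda>x. (x * (1 - x)) ^ t)"
        by (intro continuous_intros)
      fix x assume "min 0 q \<le> x" "x \<le> max 0 q"
      have "((\<lambda>p. Bp n p (hs n) / c) has_real_derivative c * (x * (1 - x)) ^ t / c) (at x)"
        by (intro DERIV_cdivide D)
      then have "((\<lambda>p. Bp n p (hs n) / c) has_real_derivative (x * (1 - x)) ^ t) (at x)"
        using c by simp
      then show "((\<lambda>p. Bp n p (hs n) / c) has_vector_derivative (x * (1 - x)) ^ t) (at x within {min 0 q..max 0 q})"
        by (simp add: has_real_derivative_iff_has_vector_derivative has_vector_derivative_at_within)
    qed
    finally show ?thesis by (simp add: diff_divide_distrib)
  qed
  have B0: "Bp n 0 (hs n) = -1" using n by (simp add: Bp_zero hs_def)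
  have B1: "Bp n 1 (hs n) = 1" using n by (simp add: Bp_one hs_def)
  have Ip: "(LBINT x=0..p. x powr (real ((n+1) div 2) - 1) * (1 - x) powr (real ((n+1) div 2) - 1))
     = (Bp n p (hs n) + 1) / c" using I[of p] p B0 by simp
  have I1: "(LBINT x=0..1. x powr (real ((n+1) div 2) - 1) * (1 - x) powr (real ((n+1) div 2) - 1))
     = 2 / c"
  proof -
    have "(LBINT x=0..1. x powr (real ((n+1) div 2) - 1) * (1 - x) powr (real ((n+1) div 2) - 1))
       = (Bp n 1 (hs n) - Bp n 0 (hs n)) / c" unfolding one_ereal_def by (rule I) simp_all
    then show ?thesis using B0 B1 by simp
  qed
  have "inc_beta p (real ((n+1) div 2)) (real ((n+1) div 2)) = ((Bp n p (hs n) + 1) / c) / (2 / c)"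
    unfolding inc_beta_def Ip I1 by simp
  also have "\<dots> = (Bp n p (hs n) + 1) / 2" using c by simp
  finally show ?thesis by simp
qed

lemma pred_comp_in[measurable]: "j \<in> J \<Longrightarrow> S \<in> sets Q \<Longrightarrow> Measurable.pred (PiM J (\<lambda>_. Q)) (\<lambda>x. x j \<in> S)"
proof -
  assume j: "j \<in> J" and S: "S \<in> sets Q"
  have "Measurable.pred Q (\<lambda>y. y \<in> S)" using S
    by (simp add: pred_def sets.Int_space_eq2 Collect_conj_eq Int_commute[of _ S] Int_def[symmetric])
  from measurable_compose[OF measurable_component_singleton[OF j] this] show ?thesis .
qed

lemma integrable_bounded_prob:
  fixes f :: "_ \<Rightarrow> real"
  assumes "prob_space M" "f \<in> borel_measurable M" "\<And>x. x \<in> space M \<Longrightarrow> \<bar>f x\<bar> \<le> B"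
  shows "integrable M f"
proof -
  interpret prob_space M by fact
  show ?thesis by (rule integrable_const_bound[where B=B]) (use assms in auto)
qed

lemma card_meas:
  assumes "finite J" "S \<in> sets Q"
  shows "(\<lambda>\<psi>. card {j\<in>J. \<psi> j \<in> S}) \<in> measurable (PiM J (\<lambda>_. Q)) (count_space UNIV)"
proof -
  have e: "card {j\<in>J. \<psi> j \<in> S} = (\<Sum>j\<in>J. (if \<psi> j \<in> S then 1 else 0::nat))" for \<psi>
    using assms(1) by (simp add: sum.If_cases Collect_conj_eq)
  show ?thesis unfolding e using assms by measurable
qed

lemma card_h_meas:
  assumes "finite J" "S \<in> sets Q"
  shows "(\<lambda>\<psi>. h (card {j\<in>J. \<psi> j \<in> S}) :: real) \<in> borel_measurable (PiM J (\<lambda>_. Q))"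
  using measurable_compose[OF card_meas[OF assms], of h borel] by simp

lemma core_binom:
  assumes Q: "prob_space Q" and S: "S \<in> sets Q" and J: "finite J"
  shows "(\<integral>\<psi>. h (card {j\<in>J. \<psi> j \<in> S}) \<partial>PiM J (\<lambda>_. Q)) = Bp (card J) (measure Q S) h"
  using J
proof (induction J arbitrary: h rule: finite_induct)
  case empty
  show ?case by (simp add: PiM_empty)
next
  case (insert a J)
  interpret Q: prob_space Q by fact
  interpret PQ: product_sigma_finite "\<lambda>_. Q"
    by (simp add: product_sigma_finite_def Q.sigma_finite_measure_axioms)
  let ?\<rho> = "measure Q S"
  let ?F = "\<lambda>\<psi>. h (card {j\<in>insert a J. \<psi> j \<in> S})"
  have int: "integrable (PiM (insert a J) (\<lambda>_. Q)) ?F"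
  proof (rule integrable_bounded_prob[where B="\<Sum>k\<le>card (insert a J). \<bar>h k\<bar>"])
    show "prob_space (PiM (insert a J) (\<lambda>_. Q))" by (rule prob_space_PiM) (use Q in auto)
    show "?F \<in> borel_measurable (PiM (insert a J) (\<lambda>_. Q))"
      by (rule card_h_meas) (use insert S in auto)
    fix \<psi>
    have "card {j\<in>insert a J. \<psi> j \<in> S} \<le> card (insert a J)"
      by (rule card_mono) (use insert in auto)
    then show "\<bar>?F \<psi>\<bar> \<le> (\<Sum>k\<le>card (insert a J). \<bar>h k\<bar>)"
      by (intro member_le_sum) auto
  qed
  have "integral\<^sup>L (PiM (insert a J) (\<lambda>_. Q)) ?F
      = (\<integral>x. (\<integral>y. ?F (x(a:=y)) \<partial>Q) \<partial>PiM J (\<lambda>_. Q))"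
    by (rule PQ.product_integral_insert) (use insert int in auto)
  also have "\<dots> = (\<integral>x. (?\<rho> * h (Suc (card {j\<in>J. x j \<in> S})) + (1 - ?\<rho>) * h (card {j\<in>J. x j \<in> S})) \<partial>PiM J (\<lambda>_. Q))"
  proof (rule Bochner_Integration.integral_cong, goal_cases)
    case 1 show ?case by simp
  next
    case (2 x)
    let ?N = "card {j\<in>J. x j \<in> S}"
    have c: "card {j\<in>insert a J. (x(a:=y)) j \<in> S} = (if y \<in> S then Suc ?N else ?N)" for y
    proof -
      have "{j\<in>insert a J. (x(a:=y)) j \<in> S} = (if y \<in> S then insert a {j\<in>J. x j \<in> S} else {j\<in>J. x j \<in> S})"
        using insert(2) by auto
      then show ?thesis using insert(1,2) by auto
    qed
    have "(\<integral>y. ?F (x(a:=y)) \<partial>Q) = (\<integral>y. h ?N + (h (Suc ?N) - h ?N) * indicator S y \<partial>Q)"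
      by (rule Bochner_Integration.integral_cong[OF refl]) (subst c, simp add: indicator_def)
    also have "\<dots> = (\<integral>y. h ?N \<partial>Q) + (\<integral>y. (h (Suc ?N) - h ?N) * indicator S y \<partial>Q)"
      by (rule Bochner_Integration.integral_add) (use S in \<open>auto intro!: integrable_real_indicator simp: Q.emeasure_finite less_top[symmetric]\<close>)
    also have "\<dots> = h ?N + (h (Suc ?N) - h ?N) * ?\<rho>"
      using S by (simp add: Q.prob_space)
    also have "\<dots> = ?\<rho> * h (Suc ?N) + (1 - ?\<rho>) * h ?N" by (simp add: algebra_simps)
    finally show ?case .
  qed
  also have "\<dots> = Bp (card J) ?\<rho> (\<lambda>k. ?\<rho> * h (Suc k) + (1 - ?\<rho>) * h k)"
    by (rule insert.IH)
  also have "\<dots> = Bp (card (insert a J)) ?\<rho> h"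
    using insert(1,2) by (simp add: Bp_lin Bp.simps(2))
  finally show ?case .
qed

lemma vec_nth_meas[measurable]: "(\<lambda>v::real^'n. v $ i) \<in> borel_measurable borel"
proof -
  have e: "(\<lambda>v::real^'n. v $ i) = (\<lambda>v. v \<bullet> axis i 1)" by (simp add: inner_axis)
  show ?thesis unfolding e by (intro borel_measurable_continuous_onI continuous_intros)
qed

lemma vec_meas:
  assumes "\<And>i. (\<lambda>x. F x $ i) \<in> borel_measurable M"
  shows "(F :: _ \<Rightarrow> real^'n) \<in> borel_measurable M"
proof (subst borel_measurable_euclidean_space, intro ballI)
  fix b :: "real^'n" assume "b \<in> Basis"
  then obtain i where b: "b = axis i 1" by (auto simp: Basis_vec_def)
  show "(\<lambda>x. F x \<bullet> b) \<in> borel_measurable M" unfolding b inner_axis using assms[of i] by simp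
qed

lemma vsign_meas[measurable]: "(vsign :: real^'n \<Rightarrow> real^'n) \<in> borel_measurable borel"
  by (rule vec_meas) (simp add: vsign_def)

lemma sgn_mono_real: "(a::real) \<le> b \<Longrightarrow> sgn a \<le> sgn b"
  by (auto simp: sgn_real_def)

lemma vote_coord:
  fixes s a :: real
  assumes "s = 1 \<or> s = -1" "a = 1 \<or> a = 0 \<or> a = -1"
  shows "(if a = s then 1 else -1) \<le> s * a"
  using assms by auto

lemma vote_lemma:
  fixes G :: "real^'d \<Rightarrow> 'b \<Rightarrow> real^'d" and g :: "real^'d \<Rightarrow> real^'d"
  assumes Q: "prob_space Q" and J: "finite J" "card J = M" and M: "1 \<le> M"
    and Gm: "G x \<in> borel_measurable Q"
  shows "rhoM_norm M Q G g x \<le> (\<integral>\<psi>. g x \<bullet> vsign (\<Sum>j\<in>J. vsign (G x (\<psi> j))) \<partial>PiM J (\<lambda>_. Q))"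
proof -
  interpret Q: prob_space Q by fact
  let ?P = "PiM J (\<lambda>_. Q)"
  have Pprob: "prob_space ?P" by (rule prob_space_PiM) (use Q in auto)
  define E where "E i \<psi> = g x $ i * sgn (\<Sum>j\<in>J. sgn (G x (\<psi> j) $ i))" for i \<psi>
  have Emeas: "E i \<in> borel_measurable ?P" for i
    unfolding E_def by measurable (use Gm in \<open>auto intro: measurable_compose[OF measurable_component_singleton]\<close>)
  have Eint: "integrable ?P (E i)" for i
  proof (rule integrable_bounded_prob[OF Pprob Emeas])
    fix \<psi> show "\<bar>E i \<psi>\<bar> \<le> \<bar>g x $ i\<bar>"
      unfolding E_def by (auto simp: abs_mult sgn_real_def)
  qed
  have eq: "g x \<bullet> vsign (\<Sum>j\<in>J. vsign (G x (\<psi> j))) = (\<Sum>i\<in>UNIV. E i \<psi>)" for \<psi>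
    unfolding E_def inner_vec_def vsign_def by (simp add: sum_component)
  have "(\<integral>\<psi>. g x \<bullet> vsign (\<Sum>j\<in>J. vsign (G x (\<psi> j))) \<partial>?P) = (\<Sum>i\<in>UNIV. (\<integral>\<psi>. E i \<psi> \<partial>?P))"
    unfolding eq by (rule Bochner_Integration.integral_sum) (use Eint in auto)
  moreover have "(2 * inc_beta (spb_rho Q G g x i) (real ((M + 1) div 2)) (real ((M + 1) div 2)) - 1)
                 * \<bar>g x $ i\<bar> \<le> (\<integral>\<psi>. E i \<psi> \<partial>?P)" for i
  proof (cases "g x $ i = 0")
    case True
    then show ?thesis by (simp add: E_def)
  next
    case False
    define s where "s = sgn (g x $ i)"
    have s: "s = 1 \<or> s = -1" using False by (auto simp: s_def sgn_real_def)
    define Si where "Si = {w \<in> space Q. sgn (G x w $ i) = s}"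
    have Si: "Si \<in> sets Q" unfolding Si_def using Gm by measurable
    have rho: "spb_rho Q G g x i = measure Q Si" unfolding spb_rho_def Si_def s_def ..
    have r01: "measure Q Si \<in> {0..1}" by (simp add: Q.prob_le_1)
    have "(2 * inc_beta (spb_rho Q G g x i) (real ((M + 1) div 2)) (real ((M + 1) div 2)) - 1)
          = Bp M (measure Q Si) (hs M)" unfolding rho by (rule inc_beta_Bp[OF M r01])
    also have "\<dots> = (\<integral>\<psi>. hs M (card {j\<in>J. \<psi> j \<in> Si}) \<partial>?P)"
      using core_binom[OF Q Si J(1), of "hs M"] J(2) by simp
    finally have A: "(2 * inc_beta (spb_rho Q G g x i) (real ((M + 1) div 2)) (real ((M + 1) div 2)) - 1)
          * \<bar>g x $ i\<bar> = (\<integral>\<psi>. \<bar>g x $ i\<bar> * hs M (card {j\<in>J. \<psi> j \<in> Si}) \<partial>?P)"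
      by simp
    have B: "(\<integral>\<psi>. \<bar>g x $ i\<bar> * hs M (card {j\<in>J. \<psi> j \<in> Si}) \<partial>?P) \<le> (\<integral>\<psi>. E i \<psi> \<partial>?P)"
    proof (rule integral_mono[OF _ Eint])
      show "integrable ?P (\<lambda>\<psi>. \<bar>g x $ i\<bar> * hs M (card {j\<in>J. \<psi> j \<in> Si}))"
      proof (rule integrable_bounded_prob[OF Pprob])
        show "(\<lambda>\<psi>. \<bar>g x $ i\<bar> * hs M (card {j\<in>J. \<psi> j \<in> Si})) \<in> borel_measurable ?P"
          using card_h_meas[OF J(1) Si, of "hs M"] by simp
        fix \<psi> show "\<bar>\<bar>g x $ i\<bar> * hs M (card {j\<in>J. \<psi> j \<in> Si})\<bar> \<le> \<bar>g x $ i\<bar>"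
          by (auto simp: abs_mult hs_def sgn_real_def)
      qed
      fix \<psi> assume \<psi>: "\<psi> \<in> space ?P"
      let ?a = "\<lambda>j. sgn (G x (\<psi> j) $ i)"
      have mem: "\<psi> j \<in> Si \<longleftrightarrow> ?a j = s" if "j \<in> J" for j
        using \<psi> that by (auto simp: Si_def space_PiM PiE_def Pi_def)
      have "(\<Sum>j\<in>J. (if ?a j = s then 1 else -1)) \<le> (\<Sum>j\<in>J. s * ?a j)"
        by (rule sum_mono, rule vote_coord[OF s]) (auto simp: sgn_real_def)
      moreover have "(\<Sum>j\<in>J. (if ?a j = s then 1 else -1)) = (\<Sum>j\<in>J. 2 * (if \<psi> j \<in> Si then 1 else 0) - (1::real))"
        by (rule sum.cong) (auto simp: mem)
      moreover have "(\<Sum>j\<in>J. 2 * (if \<psi> j \<in> Si then 1 else 0) - (1::real)) = 2 * real (card {j\<in>J. \<psi> j \<in> Si}) - real M"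
        using J by (simp add: sum_subtractf sum_distrib_left[symmetric] sum.If_cases Collect_conj_eq)
      ultimately have "hs M (card {j\<in>J. \<psi> j \<in> Si}) \<le> sgn (\<Sum>j\<in>J. s * ?a j)"
        unfolding hs_def by (metis sgn_mono_real)
      also have "sgn (\<Sum>j\<in>J. s * ?a j) = s * sgn (\<Sum>j\<in>J. ?a j)"
        using s by (auto simp: sum_distrib_left[symmetric] sgn_mult)
      finally have "\<bar>g x $ i\<bar> * hs M (card {j\<in>J. \<psi> j \<in> Si}) \<le> \<bar>g x $ i\<bar> * (s * sgn (\<Sum>j\<in>J. ?a j))"
        by (simp add: mult_left_mono)
      also have "\<dots> = E i \<psi>" unfolding E_def s_def by (simp add: abs_mult_sgn)
      finally show "\<bar>g x $ i\<bar> * hs M (card {j\<in>J. \<psi> j \<in> Si}) \<le> E i \<psi>" .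
    qed
    show ?thesis unfolding A by (rule B)
  qed
  then have "rhoM_norm M Q G g x \<le> (\<Sum>i\<in>UNIV. (\<integral>\<psi>. E i \<psi> \<partial>?P))"
    unfolding rhoM_norm_def by (rule sum_mono)
  ultimately show ?thesis by simp
qed

lemma f_cont:
  assumes grad: "\<And>x. (f has_derivative (\<lambda>h. g x \<bullet> h)) (at x)"
  shows "continuous_on UNIV f"
  by (rule continuous_at_imp_continuous_on) (use has_derivative_continuous[OF grad] in auto)

lemma g_meas:
  fixes f :: "real^'d \<Rightarrow> real"
  assumes grad: "\<And>x. (f has_derivative (\<lambda>h. g x \<bullet> h)) (at x)"
  shows "g \<in> borel_measurable borel"
proof (rule vec_meas)
  fix i :: 'd
  define v :: "real^'d" where "v = axis i 1"
  have fm[measurable]: "f \<in> borel_measurable borel"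
    by (rule borel_measurable_continuous_onI[OF f_cont[OF grad]])
  define u where "u n x = (f (x + inverse (real (Suc n)) *\<^sub>R v) - f x) / (inverse (real (Suc n)) - 0)" for n x
  show "(\<lambda>x. g x $ i) \<in> borel_measurable borel"
  proof (rule borel_measurable_LIMSEQ_real[where u=u])
    fix n show "u n \<in> borel_measurable borel" unfolding u_def by measurable
  next
    fix x :: "real^'d"
    have h1: "((\<lambda>t. x + t *\<^sub>R v) has_derivative (\<lambda>t. t *\<^sub>R v)) (at 0)"
      by (auto intro!: derivative_eq_intros)
    have h2: "(f has_derivative (\<lambda>h. g x \<bullet> h)) (at (x + 0 *\<^sub>R v))" using grad by simp
    have "((\<lambda>t. f (x + t *\<^sub>R v)) has_derivative (\<lambda>t. g x \<bullet> (t *\<^sub>R v))) (at 0)"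
      using has_derivative_compose[OF h1 h2] .
    moreover have "(\<lambda>t. g x \<bullet> (t *\<^sub>R v)) = (*) (g x $ i)"
      by (auto simp: v_def inner_axis)
    ultimately have "((\<lambda>t. f (x + t *\<^sub>R v)) has_field_derivative g x $ i) (at 0)"
      unfolding has_field_derivative_def by simp
    then have T: "((\<lambda>y. (f (x + y *\<^sub>R v) - f (x + 0 *\<^sub>R v)) / (y - 0)) \<longlongrightarrow> g x $ i) (at 0)"
      unfolding has_field_derivative_iff .
    have c: "filterlim (\<lambda>n. inverse (real (Suc n))) (at 0) sequentially"
      unfolding filterlim_at using LIMSEQ_inverse_real_of_nat by auto
    from filterlim_compose[OF T c] show "(\<lambda>n. u n x) \<longlonglongrightarrow> g x $ i"
      unfolding u_def by simp
  qed
qed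

lemma box_compact_bound:
  fixes c :: "real^'d" and f :: "real^'d \<Rightarrow> real"
  assumes "continuous_on UNIV f"
  obtains B where "\<And>x. (\<forall>i. \<bar>x $ i - c $ i\<bar> \<le> R) \<Longrightarrow> \<bar>f x\<bar> \<le> B"
proof -
  let ?S = "cbox (c - vec R) (c + vec R)"
  have "compact (f ` ?S)"
    by (rule compact_continuous_image) (use assms continuous_on_subset in auto)
  then obtain B where B: "\<And>y. y \<in> f ` ?S \<Longrightarrow> norm y \<le> B"
    using compact_imp_bounded bounded_iff by metis
  show ?thesis
  proof (rule that)
    fix x :: "real^'d" assume "\<forall>i. \<bar>x $ i - c $ i\<bar> \<le> R"
    then have "x \<in> ?S"
    proof (unfold mem_box_cart, intro allI)
      fix j assume H: "\<forall>i. \<bar>x $ i - c $ i\<bar> \<le> R"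
      have "\<bar>x $ j - c $ j\<bar> \<le> R" using H by blast
      then show "(c - vec R) $ j \<le> x $ j \<and> x $ j \<le> (c + vec R) $ j" by (simp add: abs_le_iff)
    qed
    then show "\<bar>f x\<bar> \<le> B" using B by auto
  qed
qed

lemma smooth_axis:
  fixes f :: "real^'d \<Rightarrow> real"
  assumes smooth: "\<And>x y. f y \<le> f x + g x \<bullet> (y - x) + (\<Sum>i\<in>UNIV. L i / 2 * (y $ i - x $ i)\<^sup>2)"
  shows "f (x + axis i t) \<le> f x + t * g x $ i + L i / 2 * t\<^sup>2"
proof -
  have "(\<Sum>j\<in>UNIV. L j / 2 * ((x + axis i t) $ j - x $ j)\<^sup>2) = (\<Sum>j\<in>UNIV. if j = i then L i / 2 * t\<^sup>2 else 0)"
    by (rule sum.cong) (auto simp: axis_def)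
  also have "\<dots> = L i / 2 * t\<^sup>2" by simp
  finally show ?thesis using smooth[where x=x and y="x + axis i t"] by (simp add: inner_axis mult.commute)
qed

lemma g_bound:
  fixes f :: "real^'d \<Rightarrow> real"
  assumes smooth: "\<And>x y. f y \<le> f x + g x \<bullet> (y - x) + (\<Sum>i\<in>UNIV. L i / 2 * (y $ i - x $ i)\<^sup>2)"
    and B: "\<And>x. (\<forall>i. \<bar>x $ i - c $ i\<bar> \<le> R + 1) \<Longrightarrow> \<bar>f x\<bar> \<le> B"
    and x: "\<forall>i. \<bar>x $ i - c $ i\<bar> \<le> R"
  shows "\<bar>g x $ i\<bar> \<le> 2 * B + \<bar>L i\<bar> / 2"
proof -
  have in1: "\<forall>j. \<bar>(x + axis i t) $ j - c $ j\<bar> \<le> R + 1" if "\<bar>t\<bar> \<le> 1" for t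
  proof
    fix j show "\<bar>(x + axis i t) $ j - c $ j\<bar> \<le> R + 1"
      using x[rule_format, of j] that by (auto simp: axis_def)
  qed
  have x1: "\<bar>f x\<bar> \<le> B"
  proof (rule B, rule allI)
    fix j show "\<bar>x $ j - c $ j\<bar> \<le> R + 1" using x[rule_format, of j] by simp
  qed
  have p: "\<bar>f (x + axis i 1)\<bar> \<le> B" using B in1[of 1] by simp
  have m: "\<bar>f (x + axis i (-1))\<bar> \<le> B" using B in1[of "-1"] by simp
  have "f (x + axis i 1) \<le> f x + 1 * g x $ i + L i / 2 * 1\<^sup>2" by (rule smooth_axis[OF smooth])
  moreover have "f (x + axis i (-1)) \<le> f x + (-1) * g x $ i + L i / 2 * (-1)\<^sup>2" by (rule smooth_axis[OF smooth])
  ultimately show ?thesis using x1 p m by (simp add: abs_le_iff) linarith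
qed

locale SS =
  fixes f :: "real^'d \<Rightarrow> real" and g :: "real^'d \<Rightarrow> real^'d" and L :: "'d \<Rightarrow> real"
    and M :: nat and Q :: "'b measure" and G :: "real^'d \<Rightarrow> 'b \<Rightarrow> real^'d" and x0 :: "real^'d"
  assumes grad: "\<And>x. (f has_derivative (\<lambda>h. g x \<bullet> h)) (at x)"
    and L_nonneg: "\<And>i. 0 \<le> L i"
    and smooth: "\<And>x y. f y \<le> f x + g x \<bullet> (y - x) + (\<Sum>i\<in>UNIV. L i / 2 * (y $ i - x $ i)\<^sup>2)"
    and M_ge: "1 \<le> M"
    and Qp: "prob_space Q"
    and G_meas: "(\<lambda>p. G (fst p) (snd p)) \<in> borel_measurable (borel \<Otimes>\<^sub>M Q)"
begin

definition Phi :: "(nat \<Rightarrow> real) \<Rightarrow> nat \<Rightarrow> (nat \<times> nat \<Rightarrow> 'b) \<Rightarrow> real^'d" where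
  "Phi \<gamma> k \<psi> = ssgd G \<gamma> x0 M (\<lambda>j m \<psi>. \<psi> (j, m)) k \<psi>"

definition Ik :: "nat \<Rightarrow> (nat \<times> nat) set" where "Ik k = {..<k} \<times> {..<M}"

abbreviation PQ where "PQ k \<equiv> PiM (Ik k) (\<lambda>_. Q)"

abbreviation V where "V z J \<psi> \<equiv> vsign (\<Sum>j\<in>J. vsign (G z (\<psi> j)))"

lemma Phi_0[simp]: "Phi \<gamma> 0 \<psi> = x0" by (simp add: Phi_def)

lemma Phi_Suc: "Phi \<gamma> (Suc k) \<psi> = Phi \<gamma> k \<psi> - \<gamma> k *\<^sub>R vsign (\<Sum>m<M. vsign (G (Phi \<gamma> k \<psi>) (\<psi> (k, m))))"
  by (simp add: Phi_def Let_def)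

lemma Phi_agree: "(\<And>j m. j < k \<Longrightarrow> m < M \<Longrightarrow> \<psi> (j, m) = \<psi>' (j, m)) \<Longrightarrow> Phi \<gamma> k \<psi> = Phi \<gamma> k \<psi>'"
proof (induction k)
  case 0 then show ?case by simp
next
  case (Suc k)
  then have "Phi \<gamma> k \<psi> = Phi \<gamma> k \<psi>'" by simp
  moreover have "(\<Sum>m<M. vsign (G (Phi \<gamma> k \<psi>) (\<psi> (k, m)))) = (\<Sum>m<M. vsign (G (Phi \<gamma> k \<psi>) (\<psi>' (k, m))))"
    using Suc.prems by (intro sum.cong) auto
  ultimately show ?case by (simp add: Phi_Suc)
qed

lemma ssgd_Phi: "ssgd G \<gamma> x0 M xi k \<omega> = Phi \<gamma> k (\<lambda>p. xi (fst p) (snd p) \<omega>)"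
  by (induction k) (simp_all add: Phi_Suc Let_def)

lemma Ik_Suc: "Ik (Suc k) = Ik k \<union> Pair k ` {..<M}" "Ik k \<inter> Pair k ` {..<M} = {}"
  by (auto simp: Ik_def)

lemma Ik_finite[simp]: "finite (Ik k)" by (simp add: Ik_def)

lemma G_meas_x: "G z \<in> borel_measurable Q"
  using measurable_compose[OF measurable_Pair1'[of z borel Q] G_meas] by simp

lemma Phi_meas: "k \<le> n \<Longrightarrow> Phi \<gamma> k \<in> borel_measurable (PQ n)"
proof (induction k)
  case 0 then show ?case by simp
next
  case (Suc k)
  then have IH[measurable]: "Phi \<gamma> k \<in> borel_measurable (PQ n)" by simp
  have Gm[measurable]: "(\<lambda>\<psi>. G (Phi \<gamma> k \<psi>) (\<psi> (k, m))) \<in> borel_measurable (PQ n)" if "m < M" for m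
  proof -
    have km: "(k, m) \<in> Ik n" using Suc.prems that by (auto simp: Ik_def)
    have "(\<lambda>\<psi>. (Phi \<gamma> k \<psi>, \<psi> (k, m))) \<in> measurable (PQ n) (borel \<Otimes>\<^sub>M Q)"
      by (intro measurable_Pair IH measurable_component_singleton km)
    from measurable_compose[OF this G_meas] show ?thesis by simp
  qed
  show ?case unfolding Phi_Suc[abs_def] by measurable
qed

lemma vsign_bound: "\<bar>vsign v $ i\<bar> \<le> 1"
  by (simp add: vsign_def sgn_real_def)

lemma Phi_bound: "\<bar>Phi \<gamma> k \<psi> $ i - x0 $ i\<bar> \<le> (\<Sum>j<k. \<bar>\<gamma> j\<bar>)"
proof (induction k)
  case 0 then show ?case by simp
next
  case (Suc k)
  have "\<bar>(\<gamma> k *\<^sub>R vsign (\<Sum>m<M. vsign (G (Phi \<gamma> k \<psi>) (\<psi> (k, m))))) $ i\<bar> \<le> \<bar>\<gamma> k\<bar>"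
    using vsign_bound mult_left_mono[OF vsign_bound, of "\<bar>\<gamma> k\<bar>"] by (simp add: abs_mult)
  then show ?case using Suc by (simp add: Phi_Suc)
qed

lemma f_box: obtains B where "\<And>x. (\<forall>i. \<bar>x $ i - c $ i\<bar> \<le> R) \<Longrightarrow> \<bar>f x\<bar> \<le> B"
  using box_compact_bound[OF f_cont[OF grad]] by blast

lemma g_box: obtains B where "\<And>x i. (\<forall>i. \<bar>x $ i - c $ i\<bar> \<le> R) \<Longrightarrow> \<bar>g x $ i\<bar> \<le> B"
proof -
  obtain Bf where Bf: "\<And>x. (\<forall>i. \<bar>x $ i - c $ i\<bar> \<le> R + 1) \<Longrightarrow> \<bar>f x\<bar> \<le> Bf"
    using f_box by blast
  show ?thesis
  proof (rule that[of "2 * Bf + (\<Sum>i\<in>UNIV. \<bar>L i\<bar>) / 2"])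
    fix x i assume x: "\<forall>i. \<bar>x $ i - c $ i\<bar> \<le> R"
    have "\<bar>g x $ i\<bar> \<le> 2 * Bf + \<bar>L i\<bar> / 2" by (rule g_bound[OF smooth Bf x])
    moreover have "\<bar>L i\<bar> \<le> (\<Sum>i\<in>UNIV. \<bar>L i\<bar>)" by (rule member_le_sum) auto
    ultimately show "\<bar>g x $ i\<bar> \<le> 2 * Bf + (\<Sum>i\<in>UNIV. \<bar>L i\<bar>) / 2" by simp
  qed
qed

lemma spb_rho_meas: "(\<lambda>z. spb_rho Q G g z i) \<in> borel_measurable borel"
proof -
  interpret Q: prob_space Q by (rule Qp)
  have gm[measurable]: "g \<in> borel_measurable borel" by (rule g_meas[OF grad])
  have Gm[measurable]: "(\<lambda>p. G (fst p) (snd p)) \<in> borel_measurable (borel \<Otimes>\<^sub>M Q)" by (rule G_meas)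
  let ?A = "{p \<in> space (borel \<Otimes>\<^sub>M Q). sgn (G (fst p) (snd p) $ i) = sgn (g (fst p) $ i)}"
  have A: "?A \<in> sets (borel \<Otimes>\<^sub>M Q)" by measurable
  have e: "spb_rho Q G g z i = enn2real (emeasure Q (Pair z -` ?A))" for z
    unfolding spb_rho_def measure_def by (simp add: space_pair_measure vimage_def)
  show ?thesis unfolding e
    by (intro borel_measurable_enn2real Q.measurable_emeasure_Pair[OF A])
qed

lemma Bp_cont: "continuous_on UNIV (\<lambda>p. Bp M p h)"
proof -
  obtain m where m: "M = Suc m" using M_ge by (cases M) auto
  show ?thesis unfolding m
    by (rule continuous_at_imp_continuous_on) (use DERIV_isCont[OF Bp_deriv] in auto)
qed

lemma rho01: "spb_rho Q G g z i \<in> {0..1}"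
proof -
  interpret Q: prob_space Q by (rule Qp)
  show ?thesis by (simp add: spb_rho_def)
qed

lemma rhoM_alt: "rhoM_norm M Q G g z = (\<Sum>i\<in>UNIV. Bp M (spb_rho Q G g z i) (hs M) * \<bar>g z $ i\<bar>)"
  unfolding rhoM_norm_def using inc_beta_Bp[OF M_ge rho01] by simp

lemma rhoM_meas[measurable]: "(\<lambda>z. rhoM_norm M Q G g z) \<in> borel_measurable borel"
proof -
  have gm[measurable]: "g \<in> borel_measurable borel" by (rule g_meas[OF grad])
  have bm[measurable]: "(\<lambda>p. Bp M p (hs M)) \<in> borel_measurable borel"
    by (rule borel_measurable_continuous_onI[OF Bp_cont])
  have sm[measurable]: "(\<lambda>z. spb_rho Q G g z i) \<in> borel_measurable borel" for i by (rule spb_rho_meas)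
  show ?thesis unfolding rhoM_alt by measurable
qed

lemma rhoM_bound: "\<bar>rhoM_norm M Q G g z\<bar> \<le> (\<Sum>i\<in>UNIV. \<bar>g z $ i\<bar>)"
proof -
  have "\<bar>Bp M (spb_rho Q G g z i) (hs M) * \<bar>g z $ i\<bar>\<bar> \<le> \<bar>g z $ i\<bar>" for i
  proof -
    have "\<bar>Bp M (spb_rho Q G g z i) (hs M)\<bar> \<le> 1"
      by (rule Bp_bound[OF rho01]) (simp add: hs_def sgn_real_def)
    then show ?thesis by (simp add: abs_mult mult_left_le_one_le)
  qed
  then show ?thesis unfolding rhoM_alt by (intro order_trans[OF sum_abs sum_mono]) auto
qed

end

context SS begin

lemma V_meas[measurable]: "(\<lambda>y. V z J y) \<in> borel_measurable (PiM J (\<lambda>_. Q))" if "finite J"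
proof -
  have Gz[measurable]: "G z \<in> borel_measurable Q" by (rule G_meas_x)
  have "(\<lambda>y. G z (y j)) \<in> borel_measurable (PiM J (\<lambda>_. Q))" if "j \<in> J" for j
    using measurable_compose[OF measurable_component_singleton[OF that] Gz] by simp
  then show ?thesis by measurable
qed

lemma inner_step:
  assumes J: "finite J" "card J = M" and \<gamma>: "0 \<le> c"
  shows "(\<integral>y. f (z - c *\<^sub>R V z J y) \<partial>PiM J (\<lambda>_. Q))
         \<le> f z - c * rhoM_norm M Q G g z + c\<^sup>2 * (\<Sum>i\<in>UNIV. L i) / 2"
    and "integrable (PiM J (\<lambda>_. Q)) (\<lambda>y. f (z - c *\<^sub>R V z J y))"
proof -
  interpret Q: prob_space Q by (rule Qp)
  let ?P = "PiM J (\<lambda>_. Q)"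
  have Pprob: "prob_space ?P" by (rule prob_space_PiM) (use Qp in auto)
  interpret P: prob_space ?P by (rule Pprob)
  have fm[measurable]: "f \<in> borel_measurable borel" by (rule borel_measurable_continuous_onI[OF f_cont[OF grad]])
  have Vm[measurable]: "(\<lambda>y. V z J y) \<in> borel_measurable ?P" by (rule V_meas[OF J(1)])
  obtain Bf where Bf: "\<And>x. (\<forall>i. \<bar>x $ i - z $ i\<bar> \<le> c) \<Longrightarrow> \<bar>f x\<bar> \<le> Bf" using f_box by blast
  show int1: "integrable ?P (\<lambda>y. f (z - c *\<^sub>R V z J y))"
  proof (rule integrable_bounded_prob[OF Pprob])
    show "(\<lambda>y. f (z - c *\<^sub>R V z J y)) \<in> borel_measurable ?P" by measurable
    fix y show "\<bar>f (z - c *\<^sub>R V z J y)\<bar> \<le> Bf"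
    proof (rule Bf, rule allI)
      fix i show "\<bar>(z - c *\<^sub>R V z J y) $ i - z $ i\<bar> \<le> c"
        using mult_left_mono[OF vsign_bound \<gamma>] \<gamma> by (simp add: abs_mult)
    qed
  qed
  let ?S = "(\<Sum>i\<in>UNIV. L i)"
  have int2: "integrable ?P (\<lambda>y. g z \<bullet> V z J y)"
  proof (rule integrable_bounded_prob[OF Pprob])
    show "(\<lambda>y. g z \<bullet> V z J y) \<in> borel_measurable ?P" by measurable
    fix y
    have "\<bar>g z \<bullet> V z J y\<bar> \<le> (\<Sum>i\<in>UNIV. \<bar>g z $ i * V z J y $ i\<bar>)"
      unfolding inner_vec_def by (simp add: sum_abs)
    also have "\<dots> \<le> (\<Sum>i\<in>UNIV. \<bar>g z $ i\<bar>)"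
      by (intro sum_mono, simp only: abs_mult, rule mult_left_le[OF vsign_bound]) simp
    finally show "\<bar>g z \<bullet> V z J y\<bar> \<le> (\<Sum>i\<in>UNIV. \<bar>g z $ i\<bar>)" .
  qed
  have pw: "f (z - c *\<^sub>R V z J y) \<le> f z - c * (g z \<bullet> V z J y) + c\<^sup>2 * ?S / 2" for y
  proof -
    have "f (z - c *\<^sub>R V z J y) \<le> f z + g z \<bullet> ((z - c *\<^sub>R V z J y) - z)
        + (\<Sum>i\<in>UNIV. L i / 2 * ((z - c *\<^sub>R V z J y) $ i - z $ i)\<^sup>2)"
      by (rule smooth)
    also have "g z \<bullet> ((z - c *\<^sub>R V z J y) - z) = - c * (g z \<bullet> V z J y)" by simp
    also have "(\<Sum>i\<in>UNIV. L i / 2 * ((z - c *\<^sub>R V z J y) $ i - z $ i)\<^sup>2) \<le> (\<Sum>i\<in>UNIV. L i / 2 * c\<^sup>2)"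
    proof (rule sum_mono)
      fix i
      have "((z - c *\<^sub>R V z J y) $ i - z $ i)\<^sup>2 = c\<^sup>2 * (V z J y $ i)\<^sup>2" by (simp add: power_mult_distrib)
      also have "\<dots> \<le> c\<^sup>2 * 1"
      proof (rule mult_left_mono)
        have "\<bar>V z J y $ i\<bar> \<le> 1" by (rule vsign_bound)
        then show "(V z J y $ i)\<^sup>2 \<le> 1" using abs_le_square_iff[of "V z J y $ i" 1] by simp
      qed simp
      finally show "L i / 2 * ((z - c *\<^sub>R V z J y) $ i - z $ i)\<^sup>2 \<le> L i / 2 * c\<^sup>2"
        using L_nonneg[of i] by (intro mult_left_mono) auto
    qed
    also have "(\<Sum>i\<in>UNIV. L i / 2 * c\<^sup>2) = c\<^sup>2 * ?S / 2"
      by (simp add: sum_distrib_right[symmetric] sum_divide_distrib[symmetric])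
    finally show ?thesis by simp
  qed
  have "(\<integral>y. f (z - c *\<^sub>R V z J y) \<partial>?P) \<le> (\<integral>y. f z - c * (g z \<bullet> V z J y) + c\<^sup>2 * ?S / 2 \<partial>?P)"
    by (rule integral_mono[OF int1]) (use int2 pw in \<open>auto intro!: Bochner_Integration.integrable_add Bochner_Integration.integrable_diff\<close>)
  also have "\<dots> = f z - c * (\<integral>y. g z \<bullet> V z J y \<partial>?P) + c\<^sup>2 * ?S / 2"
  proof -
    show ?thesis using int2 by (simp add: Bochner_Integration.integral_add Bochner_Integration.integral_diff P.prob_space)
  qed
  also have "\<dots> \<le> f z - c * rhoM_norm M Q G g z + c\<^sup>2 * ?S / 2"
    using vote_lemma[where G=G and g=g and x=z, OF Qp J M_ge G_meas_x] \<gamma> by (simp add: mult_left_mono)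
  finally show "(\<integral>y. f (z - c *\<^sub>R V z J y) \<partial>?P) \<le> f z - c * rhoM_norm M Q G g z + c\<^sup>2 * ?S / 2" .
qed

end

context SS begin

lemma Phi_box: "k \<le> n \<Longrightarrow> \<forall>i. \<bar>Phi \<gamma> k \<psi> $ i - x0 $ i\<bar> \<le> (\<Sum>j<n. \<bar>\<gamma> j\<bar>)"
proof
  fix i assume "k \<le> n"
  have "(\<Sum>j<k. \<bar>\<gamma> j\<bar>) \<le> (\<Sum>j<n. \<bar>\<gamma> j\<bar>)"
    by (rule sum_mono2) (use \<open>k \<le> n\<close> in auto)
  then show "\<bar>Phi \<gamma> k \<psi> $ i - x0 $ i\<bar> \<le> (\<Sum>j<n. \<bar>\<gamma> j\<bar>)" using Phi_bound[of \<gamma> k \<psi> i] by linarith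
qed

lemma PQ_prob: "prob_space (PiM I (\<lambda>_. Q))"
  by (rule prob_space_PiM) (use Qp in auto)

lemma f_Phi_int: "k \<le> n \<Longrightarrow> integrable (PQ n) (\<lambda>\<psi>. f (Phi \<gamma> k \<psi>))"
proof -
  assume kn: "k \<le> n"
  have fm[measurable]: "f \<in> borel_measurable borel" by (rule borel_measurable_continuous_onI[OF f_cont[OF grad]])
  have pm[measurable]: "Phi \<gamma> k \<in> borel_measurable (PQ n)" by (rule Phi_meas[OF kn])
  obtain B where B: "\<And>x. (\<forall>i. \<bar>x $ i - x0 $ i\<bar> \<le> (\<Sum>j<n. \<bar>\<gamma> j\<bar>)) \<Longrightarrow> \<bar>f x\<bar> \<le> B" using f_box by blast
  show ?thesis
    by (rule integrable_bounded_prob[OF PQ_prob, where B=B]) (use B Phi_box[OF kn] in auto)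
qed

lemma rho_Phi_int: "k \<le> n \<Longrightarrow> integrable (PQ n) (\<lambda>\<psi>. rhoM_norm M Q G g (Phi \<gamma> k \<psi>))"
proof -
  assume kn: "k \<le> n"
  have pm[measurable]: "Phi \<gamma> k \<in> borel_measurable (PQ n)" by (rule Phi_meas[OF kn])
  obtain B where B: "\<And>x i. (\<forall>i. \<bar>x $ i - x0 $ i\<bar> \<le> (\<Sum>j<n. \<bar>\<gamma> j\<bar>)) \<Longrightarrow> \<bar>g x $ i\<bar> \<le> B" using g_box by blast
  show ?thesis
  proof (rule integrable_bounded_prob[OF PQ_prob, where B="real CARD('d) * B"])
    show "(\<lambda>\<psi>. rhoM_norm M Q G g (Phi \<gamma> k \<psi>)) \<in> borel_measurable (PQ n)" by measurable
    fix \<psi>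
    have "\<bar>rhoM_norm M Q G g (Phi \<gamma> k \<psi>)\<bar> \<le> (\<Sum>i\<in>UNIV. \<bar>g (Phi \<gamma> k \<psi>) $ i\<bar>)" by (rule rhoM_bound)
    also have "\<dots> \<le> (\<Sum>i\<in>(UNIV::'d set). B)" by (rule sum_mono) (use B Phi_box[OF kn] in auto)
    finally show "\<bar>rhoM_norm M Q G g (Phi \<gamma> k \<psi>)\<bar> \<le> real CARD('d) * B" by simp
  qed
qed

lemma descent_step:
  assumes \<gamma>k: "0 \<le> \<gamma> k"
  shows "(\<integral>\<psi>. f (Phi \<gamma> (Suc k) \<psi>) \<partial>PQ (Suc k))
     \<le> (\<integral>\<psi>. f (Phi \<gamma> k \<psi>) \<partial>PQ k) - \<gamma> k * (\<integral>\<psi>. rhoM_norm M Q G g (Phi \<gamma> k \<psi>) \<partial>PQ k)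
        + (\<gamma> k)\<^sup>2 * (\<Sum>i\<in>UNIV. L i) / 2"
proof -
  interpret Q: prob_space Q by (rule Qp)
  interpret PS: product_sigma_finite "\<lambda>_. Q"
    by (simp add: product_sigma_finite_def Q.sigma_finite_measure_axioms)
  let ?I = "Ik k" and ?J = "Pair k ` {..<M}"
  let ?S = "(\<Sum>i\<in>UNIV. L i)"
  have IJ: "?I \<inter> ?J = {}" and fI: "finite ?I" and fJ: "finite ?J" using Ik_Suc by auto
  have cJ: "card ?J = M" by (simp add: card_image inj_on_def)
  have U: "Ik (Suc k) = ?I \<union> ?J" by (rule Ik_Suc)
  interpret P2: pair_sigma_finite "PiM ?I (\<lambda>_. Q)" "PiM ?J (\<lambda>_. Q)"
    by (intro pair_sigma_finite.intro prob_space_imp_sigma_finite PQ_prob)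
  let ?F = "\<lambda>\<psi>. f (Phi \<gamma> (Suc k) \<psi>)"
  have Fint: "integrable (PiM (?I \<union> ?J) (\<lambda>_. Q)) ?F"
    using f_Phi_int[of "Suc k" "Suc k" \<gamma>] U by simp
  have eqm: "?F (merge ?I ?J (x, y)) = f (Phi \<gamma> k x - \<gamma> k *\<^sub>R V (Phi \<gamma> k x) ?J y)" for x y
  proof -
    have a: "Phi \<gamma> k (merge ?I ?J (x, y)) = Phi \<gamma> k x"
      by (rule Phi_agree) (use IJ in \<open>auto simp: Ik_def\<close>)
    have "(\<Sum>m<M. vsign (G (Phi \<gamma> k x) (merge ?I ?J (x, y) (k, m))))
        = (\<Sum>m<M. vsign (G (Phi \<gamma> k x) (y (k, m))))"
      by (rule sum.cong) (use IJ in auto)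
    also have "\<dots> = (\<Sum>j\<in>?J. vsign (G (Phi \<gamma> k x) (y j)))"
      by (subst sum.reindex) (auto simp: inj_on_def)
    finally show ?thesis by (simp add: Phi_Suc a)
  qed
  have int_pair: "integrable (PiM ?I (\<lambda>_. Q) \<Otimes>\<^sub>M PiM ?J (\<lambda>_. Q)) (\<lambda>xy. ?F (merge ?I ?J xy))"
    by (rule integrable_distr[OF measurable_merge]) (simp add: PS.distr_merge[OF IJ fI fJ] Fint)
  have int_in: "integrable (PiM ?I (\<lambda>_. Q)) (\<lambda>x. \<integral>y. ?F (merge ?I ?J (x, y)) \<partial>PiM ?J (\<lambda>_. Q))"
    using P2.integrable_fst'[OF int_pair] by simp
  have "(\<integral>\<psi>. ?F \<psi> \<partial>PQ (Suc k)) = (\<integral>x. (\<integral>y. ?F (merge ?I ?J (x, y)) \<partial>PiM ?J (\<lambda>_. Q)) \<partial>PiM ?I (\<lambda>_. Q))"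
    unfolding U by (rule PS.product_integral_fold[OF IJ fI fJ Fint])
  also have "\<dots> \<le> (\<integral>x. f (Phi \<gamma> k x) - \<gamma> k * rhoM_norm M Q G g (Phi \<gamma> k x) + (\<gamma> k)\<^sup>2 * ?S / 2 \<partial>PiM ?I (\<lambda>_. Q))"
  proof (rule integral_mono[OF int_in])
    show "integrable (PiM ?I (\<lambda>_. Q)) (\<lambda>x. f (Phi \<gamma> k x) - \<gamma> k * rhoM_norm M Q G g (Phi \<gamma> k x) + (\<gamma> k)\<^sup>2 * ?S / 2)"
    proof -
      interpret P: prob_space "PiM ?I (\<lambda>_. Q)" by (rule PQ_prob)
      show ?thesis using f_Phi_int[of k k \<gamma>] rho_Phi_int[of k k \<gamma>] by auto
    qed
    fix x
    have "(\<integral>y. ?F (merge ?I ?J (x, y)) \<partial>PiM ?J (\<lambda>_. Q))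
        = (\<integral>y. f (Phi \<gamma> k x - \<gamma> k *\<^sub>R V (Phi \<gamma> k x) ?J y) \<partial>PiM ?J (\<lambda>_. Q))"
      by (simp only: eqm)
    also have "\<dots> \<le> f (Phi \<gamma> k x) - \<gamma> k * rhoM_norm M Q G g (Phi \<gamma> k x) + (\<gamma> k)\<^sup>2 * ?S / 2"
      by (rule inner_step(1)[OF fJ cJ \<gamma>k])
    finally show "(\<integral>y. ?F (merge ?I ?J (x, y)) \<partial>PiM ?J (\<lambda>_. Q))
        \<le> f (Phi \<gamma> k x) - \<gamma> k * rhoM_norm M Q G g (Phi \<gamma> k x) + (\<gamma> k)\<^sup>2 * ?S / 2" .
  qed
  also have "\<dots> = (\<integral>\<psi>. f (Phi \<gamma> k \<psi>) \<partial>PQ k) - \<gamma> k * (\<integral>\<psi>. rhoM_norm M Q G g (Phi \<gamma> k \<psi>) \<partial>PQ k)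
        + (\<gamma> k)\<^sup>2 * ?S / 2"
  proof -
    interpret P: prob_space "PiM ?I (\<lambda>_. Q)" by (rule PQ_prob)
    show ?thesis using f_Phi_int[of k k \<gamma>] rho_Phi_int[of k k \<gamma>]
      by (simp add: Bochner_Integration.integral_add Bochner_Integration.integral_diff P.prob_space)
  qed
  finally show ?thesis .
qed

end

context SS begin

lemma A0: "(\<integral>\<psi>. f (Phi \<gamma> 0 \<psi>) \<partial>PQ 0) = f x0"
proof -
  interpret P: prob_space "PQ 0" by (rule PQ_prob)
  show ?thesis by (simp add: P.prob_space)
qed

lemma A_lower:
  assumes lower: "\<And>x. fstar \<le> f x"
  shows "fstar \<le> (\<integral>\<psi>. f (Phi \<gamma> k \<psi>) \<partial>PQ k)"
proof -
  interpret P: prob_space "PQ k" by (rule PQ_prob)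
  have "(\<integral>\<psi>. fstar \<partial>PQ k) \<le> (\<integral>\<psi>. f (Phi \<gamma> k \<psi>) \<partial>PQ k)"
    by (rule integral_mono) (use f_Phi_int[of k k \<gamma>] lower in auto)
  then show ?thesis by (simp add: P.prob_space)
qed

lemma sum_descent:
  assumes \<gamma>: "\<And>k. 0 \<le> \<gamma> k" and lower: "\<And>x. fstar \<le> f x"
  shows "(\<Sum>k<K. \<gamma> k * (\<integral>\<psi>. rhoM_norm M Q G g (Phi \<gamma> k \<psi>) \<partial>PQ k))
      \<le> f x0 - fstar + (\<Sum>k<K. (\<gamma> k)\<^sup>2) * (\<Sum>i\<in>UNIV. L i) / 2"
proof -
  let ?A = "\<lambda>k. (\<integral>\<psi>. f (Phi \<gamma> k \<psi>) \<partial>PQ k)"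
  let ?N = "\<lambda>k. (\<integral>\<psi>. rhoM_norm M Q G g (Phi \<gamma> k \<psi>) \<partial>PQ k)"
  let ?S = "(\<Sum>i\<in>UNIV. L i)"
  have H: "?A K \<le> f x0 - (\<Sum>k<K. \<gamma> k * ?N k) + (\<Sum>k<K. (\<gamma> k)\<^sup>2) * ?S / 2" for K
  proof (induction K)
    case 0 then show ?case using A0[where \<gamma>=\<gamma>] by (simp del: Phi_0)
  next
    case (Suc K)
    have "?A (Suc K) \<le> ?A K - \<gamma> K * ?N K + (\<gamma> K)\<^sup>2 * ?S / 2" by (rule descent_step[OF \<gamma>])
    with Suc show ?case by (simp add: algebra_simps add_divide_distrib)
  qed
  show ?thesis using H[of K] A_lower[OF lower, where \<gamma>=\<gamma> and k=K] by simp
qed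

lemma transfer:
  assumes P: "prob_space P"
    and indep: "prob_space.indep_vars P (\<lambda>_. Q) (\<lambda>(k, m). xi k m) (UNIV \<times> {..<M})"
    and ident: "\<And>k m. m < M \<Longrightarrow> distr P Q (xi k m) = Q"
  shows "prob_space.expectation P (\<lambda>\<omega>. rhoM_norm M Q G g (ssgd G \<gamma> x0 M xi k \<omega>))
       = (\<integral>\<psi>. rhoM_norm M Q G g (Phi \<gamma> k \<psi>) \<partial>PQ k)"
proof (cases k)
  case 0
  interpret P: prob_space P by (rule P)
  interpret P0: prob_space "PQ 0" by (rule PQ_prob)
  show ?thesis using 0 by (simp add: P.prob_space P0.prob_space)
next
  case (Suc k')
  interpret P: prob_space P by (rule P)
  let ?X = "\<lambda>(k, m). xi k m"
  have ne: "Ik k \<noteq> {}" using Suc M_ge by (auto simp: Ik_def lessThan_empty_iff)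
  have sub: "Ik k \<subseteq> UNIV \<times> {..<M}" by (auto simp: Ik_def)
  have ind: "P.indep_vars (\<lambda>_. Q) ?X (Ik k)" by (rule P.indep_vars_subset[OF indep sub])
  have rv: "?X i \<in> measurable P Q" if "i \<in> Ik k" for i
    using indep that sub unfolding P.indep_vars_def by (cases i) auto
  let ?Y = "\<lambda>\<omega>. \<lambda>i\<in>Ik k. ?X i \<omega>"
  have Ym: "?Y \<in> measurable P (PQ k)" by (rule measurable_restrict) (use rv in auto)
  have D: "distr P (PQ k) ?Y = PQ k"
  proof -
    have "distr P (PQ k) ?Y = PiM (Ik k) (\<lambda>i. distr P Q (?X i))"
      using P.indep_vars_iff_distr_eq_PiM'[OF ne rv] ind by simp
    also have "\<dots> = PQ k"
      by (rule PiM_cong) (auto simp: Ik_def ident)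
    finally show ?thesis .
  qed
  have eq: "ssgd G \<gamma> x0 M xi k \<omega> = Phi \<gamma> k (?Y \<omega>)" for \<omega>
    unfolding ssgd_Phi by (rule Phi_agree) (auto simp: Ik_def)
  have rm[measurable]: "(\<lambda>\<psi>. rhoM_norm M Q G g (Phi \<gamma> k \<psi>)) \<in> borel_measurable (PQ k)"
    using Phi_meas[of k k \<gamma>] by measurable
  have "(\<integral>\<psi>. rhoM_norm M Q G g (Phi \<gamma> k \<psi>) \<partial>PQ k)
      = (\<integral>\<psi>. rhoM_norm M Q G g (Phi \<gamma> k \<psi>) \<partial>distr P (PQ k) ?Y)" by (simp only: D)
  also have "\<dots> = (\<integral>\<omega>. rhoM_norm M Q G g (Phi \<gamma> k (?Y \<omega>)) \<partial>P)"
    by (rule integral_distr[OF Ym rm])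
  finally show ?thesis by (simp only: eq)
qed

end

theorem theorem3:
  fixes f :: "real^'d \<Rightarrow> real" and g :: "real^'d \<Rightarrow> real^'d"
    and fstar :: real and L :: "'d \<Rightarrow> real" and M :: nat
    and P :: "'a measure" and Q :: "'b measure"
    and G :: "real^'d \<Rightarrow> 'b \<Rightarrow> real^'d"
    and xi :: "nat \<Rightarrow> nat \<Rightarrow> 'a \<Rightarrow> 'b" and x0 :: "real^'d"
  assumes grad: "\<And>x. (f has_derivative (\<lambda>h. g x \<bullet> h)) (at x)"
    and lower: "\<And>x. fstar \<le> f x"
    and L_nonneg: "\<And>i. 0 \<le> L i"
    and smooth: "\<And>x y. f y \<le> f x + g x \<bullet> (y - x) + (\<Sum>i\<in>UNIV. L i / 2 * (y $ i - x $ i)\<^sup>2)"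
    and M_ge: "1 \<le> M"
    and P: "prob_space P"
    and G_meas: "(\<lambda>p. G (fst p) (snd p)) \<in> borel_measurable (borel \<Otimes>\<^sub>M Q)"
    and indep: "prob_space.indep_vars P (\<lambda>_. Q) (\<lambda>(k, m). xi k m) (UNIV \<times> {..<M})"
    and ident: "\<And>k m. m < M \<Longrightarrow> distr P Q (xi k m) = Q"
    and SPB: "\<And>x i. g x $ i \<noteq> 0 \<Longrightarrow> spb_rho Q G g x i > 1 / 2"
  shows "(\<forall>\<gamma>0 > 0. \<forall>K \<ge> 2.
            Min ((\<lambda>k. prob_space.expectation P
                   (\<lambda>\<omega>. rhoM_norm M Q G g (ssgd G (\<lambda>j. \<gamma>0 / sqrt (real j + 1)) x0 M xi k \<omega>))) ` {..<K})
            \<le> (f x0 - fstar) / (\<gamma>0 * sqrt (real K))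
              + 3 * \<gamma>0 * real CARD('d) * ((\<Sum>i\<in>UNIV. L i) / real CARD('d)) / 2
                * (ln (real K) / sqrt (real K)))
       \<and> (\<forall>\<gamma> > 0. \<forall>K \<ge> 1.
            (1 / real K) * (\<Sum>k<K. prob_space.expectation P
                   (\<lambda>\<omega>. rhoM_norm M Q G g (ssgd G (\<lambda>_. \<gamma>) x0 M xi k \<omega>)))
            \<le> (f x0 - fstar) / (\<gamma> * real K)
              + \<gamma> * real CARD('d) * ((\<Sum>i\<in>UNIV. L i) / real CARD('d)) / 2)"
proof -
  interpret Pr: prob_space P by (rule P)
  have M0: "(0::nat, 0::nat) \<in> UNIV \<times> {..<M}" using M_ge by auto
  have "\<forall>i\<in>UNIV \<times> {..<M}. (\<lambda>(k, m). xi k m) i \<in> measurable P Q"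
    using indep unfolding Pr.indep_vars_def by (rule conjunct1)
  then have xm: "xi 0 0 \<in> measurable P Q" using M0 by fastforce
  have d0: "distr P Q (xi 0 0) = Q" using ident M_ge by simp
  have Qp: "prob_space Q"
    using Pr.prob_space_distr[OF xm] unfolding d0 .
  interpret S: SS f g L M Q G x0
    by (rule SS.intro[OF grad L_nonneg smooth M_ge Qp G_meas])
  define Ssum where "Ssum = (\<Sum>i\<in>UNIV. L i)"
  have Ss0: "0 \<le> Ssum" unfolding Ssum_def by (intro sum_nonneg L_nonneg)
  have dL: "real CARD('d) * ((\<Sum>i\<in>UNIV. L i) / real CARD('d)) = Ssum"
    unfolding Ssum_def by simp
  have C0: "0 \<le> f x0 - fstar" using lower[of x0] by simp
  have key: "(\<Sum>k<K. \<gamma> k * prob_space.expectation P (\<lambda>\<omega>. rhoM_norm M Q G g (ssgd G \<gamma> x0 M xi k \<omega>)))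
      \<le> f x0 - fstar + (\<Sum>k<K. (\<gamma> k)\<^sup>2) * Ssum / 2" if \<gamma>: "\<And>k. 0 \<le> \<gamma> k" for \<gamma> K
  proof -
    have e: "prob_space.expectation P (\<lambda>\<omega>. rhoM_norm M Q G g (ssgd G \<gamma> x0 M xi k \<omega>))
       = (\<integral>\<psi>. rhoM_norm M Q G g (S.Phi \<gamma> k \<psi>) \<partial>S.PQ k)" for k
      by (rule S.transfer[OF P indep ident])
    show ?thesis unfolding e Ssum_def by (rule S.sum_descent[OF \<gamma> lower])
  qed
  show ?thesis
  proof (intro conjI allI impI)
    fix \<gamma>0 :: real and K :: nat assume g0: "0 < \<gamma>0" and K2: "2 \<le> K"
    define \<gamma> where "\<gamma> = (\<lambda>j::nat. \<gamma>0 / sqrt (real j + 1))"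
    define E where "E k = prob_space.expectation P (\<lambda>\<omega>. rhoM_norm M Q G g (ssgd G \<gamma> x0 M xi k \<omega>))" for k
    define m where "m = Min (E ` {..<K})"
    have \<gamma>nn: "0 \<le> \<gamma> k" for k unfolding \<gamma>_def using g0 by simp
    have Kpos: "0 < real K" using K2 by simp
    have mle: "m \<le> E k" if "k < K" for k unfolding m_def using that by (intro Min_le) auto
    have sg: "\<gamma>0 * sqrt (real K) \<le> (\<Sum>k<K. \<gamma> k)"
    proof -
      have "(\<Sum>k<K. \<gamma>0 / sqrt (real K)) \<le> (\<Sum>k<K. \<gamma> k)"
      proof (rule sum_mono)
        fix k assume "k \<in> {..<K}"
        then have "sqrt (real k + 1) \<le> sqrt (real K)" by simp
        moreover have "0 < sqrt (real k + 1)" by simp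
        ultimately show "\<gamma>0 / sqrt (real K) \<le> \<gamma> k"
          unfolding \<gamma>_def using g0 by (intro divide_left_mono) auto
      qed
      moreover have "(\<Sum>k<K. \<gamma>0 / sqrt (real K)) = \<gamma>0 * sqrt (real K)"
      proof -
        have r: "real K / sqrt (real K) = sqrt (real K)" by (rule real_div_sqrt) simp
        have "(\<Sum>k<K. \<gamma>0 / sqrt (real K)) = \<gamma>0 * (real K / sqrt (real K))" by simp
        then show ?thesis by (simp only: r)
      qed
      ultimately show ?thesis by simp
    qed
    have sq: "(\<Sum>k<K. (\<gamma> k)\<^sup>2) = \<gamma>0\<^sup>2 * harm K"
    proof -
      have "(\<gamma> k)\<^sup>2 = \<gamma>0\<^sup>2 * inverse (real (Suc k))" for k
      proof -
        have "(\<gamma> k)\<^sup>2 = \<gamma>0\<^sup>2 / (sqrt (real k + 1))\<^sup>2" unfolding \<gamma>_def by (rule power_divide)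
        also have "(sqrt (real k + 1))\<^sup>2 = real (Suc k)" by simp
        finally show ?thesis by (simp add: divide_inverse)
      qed
      then show ?thesis by (simp add: harm_altdef sum_distrib_left)
    qed
    have lnK: "2/3 \<le> ln (real K)"
    proof -
      have "ln 2 \<le> ln (real K)" using K2 by simp
      then show ?thesis using ln2_ge_two_thirds by simp
    qed
    have harmK: "harm K \<le> 3 * ln (real K)"
    proof -
      obtain n where n: "K = Suc n" using K2 by (cases K) auto
      have "harm (Suc n) - ln (real (Suc n)) \<le> harm (Suc 0) - ln (real (Suc 0))"
        using decseq_harm_diff_ln[unfolded decseq_def, rule_format, of 0 n] by simp
      also have "\<dots> = 1" by (simp add: harm_altdef)
      finally have "harm K \<le> 1 + ln (real K)" using n by simp
      then show ?thesis using lnK by simp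
    qed
    define B where "B = f x0 - fstar + \<gamma>0\<^sup>2 * harm K * Ssum / 2"
    have B0: "0 \<le> B"
    proof -
      have "0 \<le> \<gamma>0\<^sup>2 * harm K * Ssum / 2" using Ss0 harm_nonneg[of K] by (intro divide_nonneg_pos mult_nonneg_nonneg) auto
      then show ?thesis unfolding B_def using C0 by linarith
    qed
    have "m * (\<Sum>k<K. \<gamma> k) \<le> (\<Sum>k<K. \<gamma> k * E k)"
    proof -
      have "m * (\<Sum>k<K. \<gamma> k) = (\<Sum>k<K. \<gamma> k * m)" by (simp add: sum_distrib_left mult.commute)
      also have "\<dots> \<le> (\<Sum>k<K. \<gamma> k * E k)"
        by (intro sum_mono mult_left_mono) (use mle \<gamma>nn in auto)
      finally show ?thesis .
    qed
    also have "\<dots> \<le> B" using key[of \<gamma> K, OF \<gamma>nn] sq unfolding E_def B_def by simp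
    finally have mB: "m * (\<Sum>k<K. \<gamma> k) \<le> B" .
    have a0: "0 < \<gamma>0 * sqrt (real K)" using g0 Kpos by simp
    have m1: "m \<le> B / (\<gamma>0 * sqrt (real K))"
    proof (cases "m \<le> 0")
      case True then show ?thesis using B0 a0 by (meson order_trans divide_nonneg_pos)
    next
      case False
      then have "m * (\<gamma>0 * sqrt (real K)) \<le> m * (\<Sum>k<K. \<gamma> k)" using sg by (intro mult_left_mono) auto
      with mB have "m * (\<gamma>0 * sqrt (real K)) \<le> B" by linarith
      then show ?thesis using a0 by (simp add: pos_le_divide_eq)
    qed
    also have "B / (\<gamma>0 * sqrt (real K)) = (f x0 - fstar) / (\<gamma>0 * sqrt (real K))
        + \<gamma>0 * harm K * Ssum / 2 / sqrt (real K)"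
      unfolding B_def using g0 by (simp add: add_divide_distrib power2_eq_square)
    also have "\<gamma>0 * harm K * Ssum / 2 / sqrt (real K) \<le> 3 * \<gamma>0 * Ssum / 2 * (ln (real K) / sqrt (real K))"
    proof -
      have "\<gamma>0 * harm K * Ssum \<le> \<gamma>0 * (3 * ln (real K)) * Ssum"
        using harmK g0 Ss0 by (intro mult_right_mono mult_left_mono) auto
      then show ?thesis using Kpos by (simp add: divide_right_mono field_simps)
    qed
    finally show "Min ((\<lambda>k. prob_space.expectation P
                   (\<lambda>\<omega>. rhoM_norm M Q G g (ssgd G (\<lambda>j. \<gamma>0 / sqrt (real j + 1)) x0 M xi k \<omega>))) ` {..<K})
            \<le> (f x0 - fstar) / (\<gamma>0 * sqrt (real K))
              + 3 * \<gamma>0 * real CARD('d) * ((\<Sum>i\<in>UNIV. L i) / real CARD('d)) / 2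
                * (ln (real K) / sqrt (real K))"
      unfolding m_def E_def \<gamma>_def using dL by (simp add: mult.assoc)
  next
    fix \<gamma> :: real and K :: nat assume g0: "0 < \<gamma>" and K1: "1 \<le> K"
    let ?E = "\<lambda>k. prob_space.expectation P (\<lambda>\<omega>. rhoM_norm M Q G g (ssgd G (\<lambda>_. \<gamma>) x0 M xi k \<omega>))"
    have "(\<Sum>k<K. \<gamma> * ?E k) \<le> f x0 - fstar + (\<Sum>k<K. \<gamma>\<^sup>2) * Ssum / 2"
      by (rule key) (use g0 in auto)
    then have h: "\<gamma> * (\<Sum>k<K. ?E k) \<le> f x0 - fstar + real K * \<gamma>\<^sup>2 * Ssum / 2"
      by (simp add: sum_distrib_left)
    have Kpos: "0 < real K" using K1 by simp
    have "(1 / real K) * (\<Sum>k<K. ?E k) = (\<gamma> * (\<Sum>k<K. ?E k)) / (\<gamma> * real K)"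
      using g0 by simp
    also have "\<dots> \<le> (f x0 - fstar + real K * \<gamma>\<^sup>2 * Ssum / 2) / (\<gamma> * real K)"
      using h g0 Kpos by (intro divide_right_mono) auto
    also have "\<dots> = (f x0 - fstar) / (\<gamma> * real K) + \<gamma> * Ssum / 2"
      using g0 Kpos by (simp add: add_divide_distrib power2_eq_square)
    finally show "(1 / real K) * (\<Sum>k<K. ?E k)
            \<le> (f x0 - fstar) / (\<gamma> * real K)
              + \<gamma> * real CARD('d) * ((\<Sum>i\<in>UNIV. L i) / real CARD('d)) / 2"
      using dL by (simp add: mult.assoc)
  qed
qed

end
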